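(* Let $R$ be a hyperring. If $R/nil(R)$ has an idempotent different from its zero and identity elements, then $R$ has an idempotent $e$ with $e\notin\{0,1\}$.
   Context: Standing conventions. A hyperring means a commutative Krasner hyperring with identity: a set $R$ with a hyperoperation $+:R\times R\to\mathcal P^*(R)$ (nonempty subsets; for subsets $A,B$ one sets $A+B=\bigcup_{a\in A,b\in B}a+b$) and a binary operation $\cdot$ such that: $+$ is associative and commutative; there is $0\in R$ with $0+x=\{x\}$ for all $x$; every $x$ has a unique $-x$ with $0\in x+(-x)$; $z\in x+y$ implies $y\in -x+z$ and $x\in z-y$; $(R,\cdot)$ is a commutative monoid with identity $1$; $0\cdot x=0$; and $x(y+z)=xy+xz$. A hyperideal of $R$ is a nonempty $I\subseteq R$ with $a-b\subseteq I$ and $ra\in I$ for all $a,b\in I$, $r\in R$. $nil(R)=\{x\in R: x^n=0\text{ for some }n\in\mathbb N\}$ (a hyperideal). For a hyperideal $I$, the quotient hyperring $R/I=\{x+I:x\in R\}$ has operations $(x+I)+(y+I)=\{z+I: z\in x+y\}$ and $(x+I)(y+I)=xy+I$, zero $I$ and identity $1+I$. *)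

theory Defs
  imports Main
begin

text \<open>A commutative Krasner hyperring with identity, given by a carrier R,
 a hyperaddition add, a multiplication mul, zero z and identity u.\<close>

definition setadd :: "('a \<Rightarrow> 'a \<Rightarrow> 'a set) \<Rightarrow> 'a set \<Rightarrow> 'a set \<Rightarrow> 'a set" where
  "setadd add A B = (\<Union>a\<in>A. \<Union>b\<in>B. add a b)"

definition hneg :: "'a set \<Rightarrow> ('a \<Rightarrow> 'a \<Rightarrow> 'a set) \<Rightarrow> 'a \<Rightarrow> 'a \<Rightarrow> 'a" where
  "hneg R add z x = (THE y. y \<in> R \<and> z \<in> add x y)"

definition hyperring ::
  "'a set \<Rightarrow> ('a \<Rightarrow> 'a \<Rightarrow> 'a set) \<Rightarrow> ('a \<Rightarrow> 'a \<Rightarrow> 'a) \<Rightarrow> 'a \<Rightarrow> 'a \<Rightarrow> bool" where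
  "hyperring R add mul z u \<longleftrightarrow>
     (\<forall>x\<in>R. \<forall>y\<in>R. add x y \<noteq> {} \<and> add x y \<subseteq> R) \<and>
     (\<forall>x\<in>R. \<forall>y\<in>R. \<forall>w\<in>R. setadd add (add x y) {w} = setadd add {x} (add y w)) \<and>
     (\<forall>x\<in>R. \<forall>y\<in>R. add x y = add y x) \<and>
     z \<in> R \<and> (\<forall>x\<in>R. add z x = {x}) \<and>
     (\<forall>x\<in>R. \<exists>!y. y \<in> R \<and> z \<in> add x y) \<and>
     (\<forall>x\<in>R. \<forall>y\<in>R. \<forall>w\<in>R. w \<in> add x y \<longrightarrow>
        y \<in> add (hneg R add z x) w \<and> x \<in> add w (hneg R add z y)) \<and>
     (\<forall>x\<in>R. \<forall>y\<in>R. mul x y \<in> R) \<and>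
     (\<forall>x\<in>R. \<forall>y\<in>R. \<forall>w\<in>R. mul (mul x y) w = mul x (mul y w)) \<and>
     (\<forall>x\<in>R. \<forall>y\<in>R. mul x y = mul y x) \<and>
     u \<in> R \<and> (\<forall>x\<in>R. mul u x = x) \<and>
     (\<forall>x\<in>R. mul z x = z) \<and>
     (\<forall>x\<in>R. \<forall>y\<in>R. \<forall>w\<in>R. mul x ` add y w = setadd add {mul x y} {mul x w})"

definition hnil :: "'a set \<Rightarrow> ('a \<Rightarrow> 'a \<Rightarrow> 'a) \<Rightarrow> 'a \<Rightarrow> 'a \<Rightarrow> 'a set" where
  "hnil R mul z u = {x \<in> R. \<exists>n::nat. n \<ge> 1 \<and> (mul x ^^ n) u = z}"

definition hcoset :: "('a \<Rightarrow> 'a \<Rightarrow> 'a set) \<Rightarrow> 'a set \<Rightarrow> 'a \<Rightarrow> 'a set" where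
  "hcoset add I x = setadd add {x} I"

text \<open>Carrier and multiplication of the quotient hyperring R/I:
 (x+I)(y+I) = xy + I.\<close>
definition quot_carrier :: "'a set \<Rightarrow> ('a \<Rightarrow> 'a \<Rightarrow> 'a set) \<Rightarrow> 'a set \<Rightarrow> 'a set set" where
  "quot_carrier R add I = hcoset add I ` R"

definition quot_mult :: "'a set \<Rightarrow> ('a \<Rightarrow> 'a \<Rightarrow> 'a set) \<Rightarrow> ('a \<Rightarrow> 'a \<Rightarrow> 'a) \<Rightarrow> 'a set
    \<Rightarrow> 'a set \<Rightarrow> 'a set \<Rightarrow> 'a set" where
  "quot_mult R add mul I X Y =
     (THE C. \<forall>x\<in>R. \<forall>y\<in>R. X = hcoset add I x \<and> Y = hcoset add I y \<longrightarrow> C = hcoset add I (mul x y))"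

end

theory Submission
  imports Defs
begin

locale hr =
  fixes R :: "'a set" and add :: "'a \<Rightarrow> 'a \<Rightarrow> 'a set" and mul :: "'a \<Rightarrow> 'a \<Rightarrow> 'a"
    and z u :: 'a
  assumes H: "hyperring R add mul z u"
begin

abbreviation neg where "neg x \<equiv> hneg R add z x"
abbreviation pw where "pw x n \<equiv> (mul x ^^ n) u"
abbreviation I where "I \<equiv> hnil R mul z u"
abbreviation hc where "hc x \<equiv> hcoset add I x"

lemmas HD = H[unfolded hyperring_def]

lemma add_R: "x\<in>R \<Longrightarrow> y\<in>R \<Longrightarrow> add x y \<subseteq> R" using HD[THEN conjunct1] by blast
lemma assoc_set: "x\<in>R \<Longrightarrow> y\<in>R \<Longrightarrow> w\<in>R \<Longrightarrow> setadd add (add x y) {w} = setadd add {x} (add y w)"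
  using HD[THEN conjunct2, THEN conjunct1] by blast
lemma add_comm: "x\<in>R \<Longrightarrow> y\<in>R \<Longrightarrow> add x y = add y x" using HD[THEN conjunct2, THEN conjunct2, THEN conjunct1] by blast
lemma zR: "z\<in>R" using HD[THEN conjunct2, THEN conjunct2, THEN conjunct2, THEN conjunct1] by blast
lemma add_z: "x\<in>R \<Longrightarrow> add z x = {x}" using HD[THEN conjunct2, THEN conjunct2, THEN conjunct2, THEN conjunct2, THEN conjunct1] by blast
lemma neg_ex: "x\<in>R \<Longrightarrow> \<exists>!y. y \<in> R \<and> z \<in> add x y" using HD[THEN conjunct2, THEN conjunct2, THEN conjunct2, THEN conjunct2, THEN conjunct2, THEN conjunct1] by blast
lemma rev: "x\<in>R \<Longrightarrow> y\<in>R \<Longrightarrow> w\<in>R \<Longrightarrow> w \<in> add x y \<Longrightarrow> y \<in> add (neg x) w \<and> x \<in> add w (neg y)"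
  using HD[THEN conjunct2, THEN conjunct2, THEN conjunct2, THEN conjunct2, THEN conjunct2, THEN conjunct2, THEN conjunct1] by blast
lemma mulR: "x\<in>R \<Longrightarrow> y\<in>R \<Longrightarrow> mul x y \<in> R" using HD[THEN conjunct2, THEN conjunct2, THEN conjunct2, THEN conjunct2, THEN conjunct2, THEN conjunct2, THEN conjunct2, THEN conjunct1] by blast
lemma mul_assoc: "x\<in>R \<Longrightarrow> y\<in>R \<Longrightarrow> w\<in>R \<Longrightarrow> mul (mul x y) w = mul x (mul y w)" using HD[THEN conjunct2, THEN conjunct2, THEN conjunct2, THEN conjunct2, THEN conjunct2, THEN conjunct2, THEN conjunct2, THEN conjunct2, THEN conjunct1] by blast
lemma mul_comm: "x\<in>R \<Longrightarrow> y\<in>R \<Longrightarrow> mul x y = mul y x" using HD[THEN conjunct2, THEN conjunct2, THEN conjunct2, THEN conjunct2, THEN conjunct2, THEN conjunct2, THEN conjunct2, THEN conjunct2, THEN conjunct2, THEN conjunct1] by blast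
lemma uR: "u\<in>R" using HD[THEN conjunct2, THEN conjunct2, THEN conjunct2, THEN conjunct2, THEN conjunct2, THEN conjunct2, THEN conjunct2, THEN conjunct2, THEN conjunct2, THEN conjunct2, THEN conjunct1] by blast
lemma mul_u: "x\<in>R \<Longrightarrow> mul u x = x" using HD[THEN conjunct2, THEN conjunct2, THEN conjunct2, THEN conjunct2, THEN conjunct2, THEN conjunct2, THEN conjunct2, THEN conjunct2, THEN conjunct2, THEN conjunct2, THEN conjunct2, THEN conjunct1] by blast
lemma mul_z: "x\<in>R \<Longrightarrow> mul z x = z" using HD[THEN conjunct2, THEN conjunct2, THEN conjunct2, THEN conjunct2, THEN conjunct2, THEN conjunct2, THEN conjunct2, THEN conjunct2, THEN conjunct2, THEN conjunct2, THEN conjunct2, THEN conjunct2, THEN conjunct1] by blast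
lemma dist: "x\<in>R \<Longrightarrow> y\<in>R \<Longrightarrow> w\<in>R \<Longrightarrow> mul x ` add y w = setadd add {mul x y} {mul x w}"
  using HD[THEN conjunct2, THEN conjunct2, THEN conjunct2, THEN conjunct2, THEN conjunct2, THEN conjunct2, THEN conjunct2, THEN conjunct2, THEN conjunct2, THEN conjunct2, THEN conjunct2, THEN conjunct2, THEN conjunct2] by blast

lemma mul_u2: "x\<in>R \<Longrightarrow> mul x u = x" using mul_u mul_comm uR by metis
lemma mul_z2: "x\<in>R \<Longrightarrow> mul x z = z" using mul_z mul_comm zR by metis
lemma add_z2: "x\<in>R \<Longrightarrow> add x z = {x}" using add_z add_comm zR by metis

lemma mem_setadd: "v \<in> setadd add A B \<longleftrightarrow> (\<exists>a\<in>A. \<exists>b\<in>B. v \<in> add a b)"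
  unfolding setadd_def by blast

lemma assoc1: assumes "x\<in>R" "y\<in>R" "w\<in>R" "p \<in> add x y" "v \<in> add p w" shows "\<exists>q\<in>add y w. v \<in> add x q"
proof -
  have "v \<in> setadd add (add x y) {w}" using assms(4,5) by (auto simp: mem_setadd)
  then have "v \<in> setadd add {x} (add y w)" using assoc_set assms(1-3) by simp
  then show ?thesis by (auto simp: mem_setadd)
qed

lemma dist2: "x\<in>R \<Longrightarrow> y\<in>R \<Longrightarrow> w\<in>R \<Longrightarrow> mul x ` add y w = add (mul x y) (mul x w)"
  using dist by (simp add: setadd_def)

lemma neg: "x\<in>R \<Longrightarrow> neg x \<in> R \<and> z \<in> add x (neg x)"
  unfolding hneg_def by (rule theI'[OF neg_ex])

lemma neg_uniq: "x\<in>R \<Longrightarrow> y\<in>R \<Longrightarrow> z \<in> add x y \<Longrightarrow> y = neg x"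
  using neg neg_ex by metis

lemma neg_neg: "x\<in>R \<Longrightarrow> neg (neg x) = x"
  by (metis neg neg_uniq add_comm)

lemma mul_neg: assumes "x\<in>R" "y\<in>R" shows "mul x (neg y) = neg (mul x y)"
proof -
  have "z \<in> add y (neg y)" "neg y \<in> R" using neg assms by auto
  hence "mul x z \<in> mul x ` add y (neg y)" by blast
  hence "z \<in> add (mul x y) (mul x (neg y))" using dist2 assms mul_z2 \<open>neg y \<in> R\<close> by simp
  thus ?thesis using neg_uniq assms mulR \<open>neg y \<in> R\<close> by blast
qed

lemma neg_sq: assumes "a\<in>R" shows "mul (neg a) (neg a) = mul a a"
proof -
  have n: "neg a \<in> R" using neg assms by auto
  have "mul (neg a) (neg a) = neg (mul (neg a) a)" using mul_neg n assms by blast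
  also have "\<dots> = neg (mul a (neg a))" using mul_comm n assms by simp
  also have "\<dots> = neg (neg (mul a a))" using mul_neg assms by simp
  also have "\<dots> = mul a a" using neg_neg mulR assms by simp
  finally show ?thesis .
qed

lemma pw_R: "x\<in>R \<Longrightarrow> pw x n \<in> R"
  by (induction n) (auto simp: uR mulR)

lemma pw_add: "x\<in>R \<Longrightarrow> pw x (m+n) = mul (pw x m) (pw x n)"
  by (induction m) (auto simp: mul_u pw_R mul_assoc)

lemma mul4: "a\<in>R \<Longrightarrow> b\<in>R \<Longrightarrow> c\<in>R \<Longrightarrow> d\<in>R \<Longrightarrow> mul (mul a b) (mul c d) = mul (mul a c) (mul b d)"
  by (metis mul_assoc mul_comm mulR)

lemma pw_mul: "x\<in>R \<Longrightarrow> y\<in>R \<Longrightarrow> pw (mul x y) n = mul (pw x n) (pw y n)"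
  by (induction n) (auto simp: mul_u uR mul4 pw_R)

lemma pw_pw: "x\<in>R \<Longrightarrow> pw (pw x a) b = pw x (a*b)"
proof (induction b)
  case 0 then show ?case by simp
next
  case (Suc b)
  then show ?case using pw_add[of x a "a*b"] by simp
qed

lemma pw_z: "n\<ge>1 \<Longrightarrow> pw z n = z"
  by (cases n) (auto simp: mul_z pw_R zR)

lemma pw_big: assumes "x\<in>R" "pw x n = z" "n \<le> m" shows "pw x m = z"
proof -
  have "m = n + (m-n)" using assms by simp
  hence "pw x m = mul (pw x n) (pw x (m-n))" using pw_add assms by metis
  thus ?thesis using assms mul_z pw_R by simp
qed

lemma pw_u: "pw u n = u" by (induction n) (auto simp: mul_u uR)

lemma pw_one: "x\<in>R \<Longrightarrow> pw x 1 = x" by (simp add: mul_u2)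

lemma L1: assumes "y\<in>R" "s\<in>R" "t\<in>R" "y \<in> add s t"
  shows "\<exists>w\<in>R. mul y y \<in> add (mul s s) (mul t w)"
proof -
  have "mul y y \<in> mul y ` add s t" using assms by blast
  hence 1: "mul y y \<in> add (mul y s) (mul y t)" using dist2 assms by simp
  have "mul s y \<in> mul s ` add s t" using assms by blast
  hence 2: "mul y s \<in> add (mul s s) (mul s t)" using dist2 assms mul_comm by simp
  obtain q where q: "q \<in> add (mul s t) (mul y t)" "mul y y \<in> add (mul s s) q"
    using assoc1[OF _ _ _ 2 1] mulR assms by blast
  have "add (mul s t) (mul y t) = add (mul t s) (mul t y)" using mul_comm assms by simp
  also have "\<dots> = mul t ` add s y" using dist2 assms by simp
  finally obtain w where "w \<in> add s y" "q = mul t w" using q by auto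
  moreover have "w \<in> R" using add_R assms \<open>w \<in> add s y\<close> by blast
  ultimately show ?thesis using q by blast
qed

lemma G: assumes "y\<in>R" "s\<in>R" "t\<in>R" "y \<in> add s t"
  shows "\<exists>w\<in>R. pw y (2^k) \<in> add (pw s (2^k)) (mul t w)"
proof (induction k)
  case 0
  show ?case using assms uR by (intro bexI[of _ u]) (auto simp: mul_u2)
next
  case (Suc k)
  then obtain w where w: "w\<in>R" "pw y (2^k) \<in> add (pw s (2^k)) (mul t w)" by blast
  obtain w' where w': "w'\<in>R" "mul (pw y (2^k)) (pw y (2^k)) \<in> add (mul (pw s (2^k)) (pw s (2^k))) (mul (mul t w) w')"
    using L1[OF pw_R pw_R mulR w(2)] assms w(1) by blast
  have e: "(2::nat)^Suc k = 2^k + 2^k" by simp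
  have "pw y (2^Suc k) \<in> add (pw s (2^Suc k)) (mul t (mul w w'))"
    using w' unfolding e pw_add[OF assms(1)] pw_add[OF assms(2)] using mul_assoc assms w(1) by simp
  moreover have "mul w w' \<in> R" using mulR w w' by blast
  ultimately show ?case by blast
qed

lemma I_iff: "x \<in> I \<longleftrightarrow> x \<in> R \<and> (\<exists>n\<ge>1. pw x n = z)"
  unfolding hnil_def by simp

lemma zI: "z \<in> I" using I_iff zR pw_one by fastforce

lemma I_mul: assumes "a\<in>I" "r\<in>R" shows "mul r a \<in> I"
proof -
  obtain n where "n\<ge>1" "pw a n = z" "a\<in>R" using assms I_iff by blast
  thus ?thesis using pw_mul[of r a n] assms mulR mul_z2 pw_R I_iff by metis
qed

lemma I_neg: assumes "a\<in>I" shows "neg a \<in> I"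
proof -
  obtain n where n: "n\<ge>1" "pw a n = z" and aR: "a\<in>R" using assms I_iff by blast
  have nR: "neg a \<in> R" using neg aR by blast
  have "pw (neg a) (n+n) = mul (pw (neg a) n) (pw (neg a) n)" using pw_add nR by blast
  also have "\<dots> = pw (mul (neg a) (neg a)) n" using pw_mul nR by metis
  also have "\<dots> = pw (mul a a) n" using neg_sq aR by simp
  also have "\<dots> = z" using pw_mul aR n mul_z pw_R zR by simp
  finally show ?thesis using I_iff nR n by (metis le_add2 order_trans)
qed

lemma I_add: assumes "a\<in>I" "c\<in>I" "d \<in> add a c" shows "d \<in> I"
proof -
  obtain m where m: "pw a m = z" and aR: "a\<in>R" using assms I_iff by blast
  obtain n where n: "pw c n = z" and cR: "c\<in>R" using assms I_iff by blast
  have dR: "d\<in>R" using add_R aR cR assms by blast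
  obtain w where w: "w\<in>R" "pw d (2^m) \<in> add (pw a (2^m)) (mul c w)"
    using G[OF dR aR cR assms(3)] by blast
  have "pw a (2^m) = z" using pw_big[OF aR m] by (simp add: less_imp_le)
  hence "pw d (2^m) = mul c w" using w add_z mulR cR by simp
  hence "pw d (2^m * 2^n) = pw (mul c w) (2^n)" using pw_pw dR by metis
  also have "\<dots> = mul (pw c (2^n)) (pw w (2^n))" using pw_mul cR w by blast
  also have "pw c (2^n) = z" using pw_big[OF cR n] by (simp add: less_imp_le)
  finally have "pw d (2^m * 2^n) = z" using mul_z pw_R w by simp
  moreover have "(1::nat) \<le> 2^m * 2^n" by simp
  ultimately show ?thesis using I_iff dR by blast
qed

lemma I_R: "I \<subseteq> R" using I_iff by blast

lemma mem_hc: "v \<in> hc x \<longleftrightarrow> (\<exists>a\<in>I. v \<in> add x a)"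
  unfolding hcoset_def mem_setadd by simp

lemma C1: "x\<in>R \<Longrightarrow> x \<in> hc x" using mem_hc zI add_z2 by blast

lemma C2a: assumes "x\<in>R" "y \<in> hc x" shows "hc y \<subseteq> hc x"
proof
  fix v assume "v \<in> hc y"
  then obtain c where c: "c\<in>I" "v \<in> add y c" using mem_hc by blast
  obtain a where a: "a\<in>I" "y \<in> add x a" using assms mem_hc by blast
  obtain q where "q \<in> add a c" "v \<in> add x q" using assoc1[OF assms(1) _ _ a(2) c(2)] a c I_R by blast
  thus "v \<in> hc x" using I_add a c mem_hc by blast
qed

lemma C2b: assumes "x\<in>R" "y \<in> hc x" shows "x \<in> hc y"
proof -
  obtain a where a: "a\<in>I" "y \<in> add x a" using assms mem_hc by blast
  have "y \<in> R" using a add_R assms I_R by blast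
  hence "x \<in> add y (neg a)" using rev[OF assms(1) _ _ a(2)] a I_R by blast
  thus ?thesis using I_neg a mem_hc by blast
qed

lemma hc_R: "x\<in>R \<Longrightarrow> hc x \<subseteq> R" using mem_hc add_R I_R by blast

lemma C2: assumes "x\<in>R" "y \<in> hc x" shows "hc y = hc x"
proof -
  have 1: "hc y \<subseteq> hc x" by (rule C2a[OF assms])
  have 2: "x \<in> hc y" by (rule C2b[OF assms])
  have yR: "y\<in>R" using hc_R assms by blast
  have "hc x \<subseteq> hc y" by (rule C2a[OF yR 2])
  thus ?thesis using 1 by blast
qed

lemma mul_lcomm: "a\<in>R \<Longrightarrow> b\<in>R \<Longrightarrow> c\<in>R \<Longrightarrow> mul a (mul b c) = mul b (mul a c)"
  by (metis mul_assoc mul_comm)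

lemma C3: assumes "x\<in>R" "x'\<in>R" "y\<in>R" "hc x = hc x'" shows "hc (mul x y) = hc (mul x' y)"
proof -
  have "x' \<in> hc x" using C1 assms by simp
  then obtain a where a: "a\<in>I" "x' \<in> add x a" using mem_hc by blast
  have "mul y x' \<in> mul y ` add x a" using a by blast
  moreover have "mul y ` add x a = add (mul y x) (mul y a)" using dist2 assms a I_R by blast
  ultimately have "mul y x' \<in> add (mul y x) (mul y a)" by simp
  moreover have "mul y x' = mul x' y" "mul y x = mul x y" using mul_comm assms by auto
  ultimately have "mul x' y \<in> add (mul x y) (mul y a)" by simp
  hence "mul x' y \<in> hc (mul x y)" using I_mul a assms mem_hc by blast
  thus ?thesis using C2[OF mulR[OF assms(1,3)]] by simp
qed

lemma hc_z: "hc z = I"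
proof -
  have h: "\<And>a. a\<in>I \<Longrightarrow> add z a = {a}" using add_z I_R by blast
  show ?thesis
  proof (intro set_eqI)
    fix v show "v \<in> hc z \<longleftrightarrow> v \<in> I" unfolding mem_hc using h by auto
  qed
qed

end

theorem mainTheorem6:
  fixes R :: "'a set" and add :: "'a \<Rightarrow> 'a \<Rightarrow> 'a set" and mul :: "'a \<Rightarrow> 'a \<Rightarrow> 'a"
    and z u :: 'a
  assumes "hyperring R add mul z u"
    and "\<exists>X\<in>quot_carrier R add (hnil R mul z u).
           quot_mult R add mul (hnil R mul z u) X X = X \<and>
           X \<noteq> hnil R mul z u \<and>
           X \<noteq> hcoset add (hnil R mul z u) u"
  shows "\<exists>e\<in>R. mul e e = e \<and> e \<noteq> z \<and> e \<noteq> u"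
proof -
  interpret hr R add mul z u by (rule hr.intro) (rule assms(1))
  obtain x where xR: "x\<in>R" and qm: "quot_mult R add mul I (hc x) (hc x) = hc x"
    and nI: "hc x \<noteq> I" and nU: "hc x \<noteq> hc u"
    using assms(2) unfolding quot_carrier_def by blast
  have xxR: "mul x x \<in> R" using mulR xR by blast
  have "quot_mult R add mul I (hc x) (hc x) = hc (mul x x)"
    unfolding quot_mult_def
  proof (rule the_equality)
    show "\<forall>x1\<in>R. \<forall>y1\<in>R. hc x = hc x1 \<and> hc x = hc y1 \<longrightarrow> hc (mul x x) = hc (mul x1 y1)"
    proof (intro ballI impI)
      fix x1 y1 assume h: "x1\<in>R" "y1\<in>R" "hc x = hc x1 \<and> hc x = hc y1"
      have "hc (mul x1 y1) = hc (mul x y1)" using C3[OF h(1) xR h(2)] h(3) by simp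
      also have "\<dots> = hc (mul y1 x)" using mul_comm h xR by simp
      also have "\<dots> = hc (mul x x)" using C3[OF h(2) xR xR] h(3) by metis
      finally show "hc (mul x x) = hc (mul x1 y1)" by simp
    qed
  next
    fix C assume "\<forall>x1\<in>R. \<forall>y1\<in>R. hc x = hc x1 \<and> hc x = hc y1 \<longrightarrow> C = hc (mul x1 y1)"
    thus "C = hc (mul x x)" using xR by blast
  qed
  hence "hc (mul x x) = hc x" using qm by simp
  hence "mul x x \<in> hc x" using C1[OF xxR] by simp
  then obtain a where a: "a\<in>I" "mul x x \<in> add x a" using mem_hc by blast
  have aR: "a\<in>R" using a I_R by blast
  have nxR: "neg x \<in> R" using neg xR by blast
  have naR: "neg a \<in> R" using neg aR by blast
  have nxxR: "neg (mul x x) \<in> R" using neg xxR by blast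
  have "x \<in> add (mul x x) (neg a)" using rev[OF xR aR xxR a(2)] by blast
  hence "neg a \<in> add (neg (mul x x)) x" using rev[OF xxR naR xR] by blast
  moreover have "add (neg (mul x x)) x = add (mul x u) (mul x (neg x))"
    using add_comm[OF nxxR xR] mul_neg[OF xR xR] mul_u2[OF xR] by simp
  ultimately have "neg a \<in> mul x ` add u (neg x)" using dist2[OF xR uR nxR] by simp
  then obtain b where b: "b \<in> add u (neg x)" "mul x b = neg a" by (metis imageE)
  have bR: "b\<in>R" using b add_R uR nxR by blast
  have "u \<in> add b (neg (neg x))" using rev[OF uR nxR bR b(1)] by blast
  hence ub: "u \<in> add x b" using neg_neg[OF xR] add_comm[OF xR bR] by simp
  define c where "c = mul x b"
  have cI: "c \<in> I" using I_neg a b c_def by simp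
  then obtain n where n: "pw c n = z" and cR: "c\<in>R" using I_iff by blast
  define N where "N = (2::nat)^n"
  have cN: "pw c N = z" using pw_big[OF cR n] N_def by (simp add: less_imp_le)
  have N1: "N \<ge> 1" using N_def by simp
  have "\<exists>w\<in>R. u \<in> add (pw x N) (mul b w)"
    using G[OF uR xR bR ub, of n] by (simp add: pw_u N_def)
  then obtain w where w: "w\<in>R" "u \<in> add (pw x N) (mul b w)" by blast
  define s where "s = pw x N"
  define t where "t = mul b w"
  have sR: "s\<in>R" using s_def pw_R xR by blast
  have tR: "t\<in>R" using t_def mulR bR w by blast
  have ut: "u \<in> add t s" using w s_def t_def add_comm[OF sR tR] by simp
  have "\<exists>w'\<in>R. u \<in> add (pw t N) (mul s w')"
    using G[OF uR tR sR ut, of n] by (simp add: pw_u N_def)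
  then obtain w' where w': "w'\<in>R" "u \<in> add (pw t N) (mul s w')" by blast
  define e where "e = mul s w'"
  define f where "f = pw t N"
  have eR: "e\<in>R" using e_def mulR sR w' by blast
  have fR: "f\<in>R" using f_def pw_R tR by blast
  have pbR: "pw b N \<in> R" "pw w N \<in> R" using pw_R bR w by auto
  have "mul e f = mul (mul s w') (mul (pw b N) (pw w N))"
    unfolding e_def f_def t_def using pw_mul[OF bR w(1)] by simp
  also have "\<dots> = mul (mul s (pw b N)) (mul w' (pw w N))" using mul4 sR w' pbR by blast
  also have "mul s (pw b N) = z" unfolding s_def using pw_mul[OF xR bR] c_def cN by simp
  finally have ef: "mul e f = z" using mul_z mulR w' pbR by simp
  have "mul e u \<in> mul e ` add f e" using w' e_def f_def by blast
  hence "e \<in> add (mul e f) (mul e e)" using dist2[OF eR fR eR] mul_u2[OF eR] by simp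
  hence ee: "mul e e = e" using ef add_z mulR eR by simp
  have Nn: "N = Suc (N - 1)" using N1 by simp
  have ptR: "pw t (N-1) \<in> R" "pw x (N-1) \<in> R" using pw_R tR xR by auto
  have ez: "e \<noteq> z"
  proof
    assume "e = z"
    hence uf: "u = f" using w' e_def f_def add_z2 fR by simp
    have "x = mul x f" using uf mul_u2 xR by simp
    also have "\<dots> = mul x (mul t (pw t (N-1)))" unfolding f_def by (subst Nn) simp
    also have "\<dots> = mul c (mul w (pw t (N-1)))"
      unfolding c_def using mul_assoc[OF bR w(1) ptR(1)] mul_assoc[OF xR bR mulR[OF w(1) ptR(1)]] t_def by simp
    also have "\<dots> = mul (mul w (pw t (N-1))) c" using mul_comm cR mulR w(1) ptR by simp
    finally have "x \<in> I" using I_mul[OF cI] mulR w(1) ptR by simp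
    hence "hc x = hc z" using C2[OF zR] hc_z by simp
    thus False using nI hc_z by simp
  qed
  have eu: "e \<noteq> u"
  proof
    assume "e = u"
    have "b = mul b e" using \<open>e = u\<close> mul_u2 bR by simp
    also have "\<dots> = mul b (mul (mul x (pw x (N-1))) w')" unfolding e_def s_def by (subst Nn) simp
    also have "\<dots> = mul b (mul x (mul (pw x (N-1)) w'))" using mul_assoc xR ptR w'(1) by simp
    also have "\<dots> = mul x (mul b (mul (pw x (N-1)) w'))" using mul_lcomm xR bR ptR w'(1) mulR by simp
    also have "\<dots> = mul c (mul (pw x (N-1)) w')" unfolding c_def using xR bR ptR w'(1) by (simp add: mul_assoc mulR)
    also have "\<dots> = mul (mul (pw x (N-1)) w') c" using mul_comm cR mulR w'(1) ptR by simp
    finally have "b \<in> I" using I_mul[OF cI] mulR w'(1) ptR by simp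
    hence "u \<in> hc x" using ub mem_hc by blast
    hence "hc u = hc x" using C2 xR by blast
    thus False using nU by simp
  qed
  show ?thesis using eR ee ez eu by blast
qed

end
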